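(* Consider algorithm TRIEST-FD (described in the context) run with integer parameter $M\ge 6$ on a fully-dynamic edge stream. Let $t^*$ be the first time step $t\ge M+1$ such that $|E^{(t)}|=M+1$ ($t^*=+\infty$ if no such time step exists). Then $\rho^{(t)}=|\Delta^{(t)}|$ for all $t<t^*$, and $\mathbb{E}\left[\rho^{(t)}\right]=|\Delta^{(t)}|$ for all $t\ge t^*$.
   Context: A fully-dynamic edge stream: at each time step $t=1,2,\dots$ an element $(\bullet,\{u,v\})$ arrives with $\bullet\in\{+,-\}$ and $u\neq v$; starting from the empty graph, $E^{(t)}=E^{(t-1)}\cup\{\{u,v\}\}$ if $\bullet=+$ and $E^{(t)}=E^{(t-1)}\setminus\{\{u,v\}\}$ if $\bullet=-$, and every operation has effect (an insertion is only of an edge not in $E^{(t-1)}$, a deletion only of an edge in $E^{(t-1)}$); the order is arbitrary but independent of the algorithm's random bits. $G^{(t)}$ is the graph with edge set $E^{(t)}$, $s^{(t)}=|E^{(t)}|$, and $\Delta^{(t)}$ the set of triangles of $G^{(t)}$ (sets of three edges $\{\{u,v\},\{v,w\},\{w,u\}\}\subseteq E^{(t)}$ with $u,v,w$ distinct). TRIEST-FD (random pairing) keeps an edge sample $\mathcal{S}$ (initially empty), counters $d_{\mathrm i}=d_{\mathrm o}=0$, and a counter $\tau$ which, by incremental updates after each insertion into or removal from $\mathcal{S}$, always equals the number of triangles all of whose edges are in $\mathcal{S}$. On a deletion of edge $e$: if $e\in\mathcal{S}$, $e$ is removed from $\mathcal{S}$ and $d_{\mathrm i}$ is increased by $1$;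 otherwise $d_{\mathrm o}$ is increased by $1$. On an insertion of edge $e$: if $d_{\mathrm i}+d_{\mathrm o}=0$, then if $|\mathcal{S}|<M$, $e$ is inserted into $\mathcal{S}$; otherwise, with probability $M/s^{(t)}$, an edge chosen uniformly at random from $\mathcal{S}$ is removed and $e$ inserted, else $\mathcal{S}$ is unchanged. If $d_{\mathrm i}+d_{\mathrm o}>0$, then with probability $d_{\mathrm i}/(d_{\mathrm i}+d_{\mathrm o})$, $e$ is inserted into $\mathcal{S}$ and $d_{\mathrm i}$ is decreased by $1$; otherwise $e$ is not inserted and $d_{\mathrm o}$ is decreased by $1$. Let $M^{(t)}=|\mathcal{S}|$, $\tau^{(t)}$, $d_{\mathrm i}^{(t)}$, $d_{\mathrm o}^{(t)}$ be the values at the end of time step $t$, $\omega^{(t)}=\min\{M,s^{(t)}+d_{\mathrm i}^{(t)}+d_{\mathrm o}^{(t)}\}$, and \[ \kappa^{(t)}=1-\sum_{j=0}^{2}\binom{s^{(t)}}{j}\binom{d_{\mathrm i}^{(t)}+d_{\mathrm o}^{(t)}}{\omega^{(t)}-j}\Big/\binom{s^{(t)}+d_{\mathrm i}^{(t)}+d_{\mathrm o}^{(t)}}{\omega^{(t)}} \] (with $\binom{0}{0}=1$). For $a\le b\le c$, $\psi_{a,b,c}=\binom{c}{b}/\binom{c-a}{b-a}=\prod_{i=0}^{a-1}\frac{c-i}{b-i}$. The estimate is $\rho^{(t)}=0$ if $M^{(t)}<3$ and $\rho^{(t)}=\frac{\tau^{(t)}}{\kappa^{(t)}}\psi_{3,M^{(t)},s^{(t)}}$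 otherwise. *)

theory Defs
  imports "HOL-Probability.Probability"
begin

(* A stream element: (True, u, v) = insertion of {u,v}; (False, u, v) = deletion of {u,v}.
   The stream is a list; the element arriving at time step t (t >= 1) is  sigma ! (t - 1). *)
type_synonym 'v op = "bool \<times> 'v \<times> 'v"

definition op_edge :: "'v op \<Rightarrow> 'v set" where
  "op_edge x = {fst (snd x), snd (snd x)}"

primrec graph_at :: "'v op list \<Rightarrow> nat \<Rightarrow> 'v set set" where
  "graph_at \<sigma> 0 = {}"
| "graph_at \<sigma> (Suc t) =
     (if fst (\<sigma> ! t) then insert (op_edge (\<sigma> ! t)) (graph_at \<sigma> t)
      else graph_at \<sigma> t - {op_edge (\<sigma> ! t)})"

definition valid_stream :: "'v op list \<Rightarrow> bool" where
  "valid_stream \<sigma> \<longleftrightarrow>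
     (\<forall>t < length \<sigma>. fst (snd (\<sigma> ! t)) \<noteq> snd (snd (\<sigma> ! t)) \<and>
        (fst (\<sigma> ! t) \<longrightarrow> op_edge (\<sigma> ! t) \<notin> graph_at \<sigma> t) \<and>
        (\<not> fst (\<sigma> ! t) \<longrightarrow> op_edge (\<sigma> ! t) \<in> graph_at \<sigma> t))"

definition triangles :: "'v set set \<Rightarrow> 'v set set set" where
  "triangles E = {T. \<exists>u v w. u \<noteq> v \<and> v \<noteq> w \<and> w \<noteq> u \<and>
                      T = {{u, v}, {v, w}, {w, u}} \<and> T \<subseteq> E}"

(* algorithm state: (sample S, d_i, d_o); tau is the number of triangles inside S *)
type_synonym 'v state = "'v set set \<times> nat \<times> nat"

definition tau :: "'v state \<Rightarrow> nat" where
  "tau st = card (triangles (fst st))"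

(* one step of TRIEST-FD; s is s^(t), the number of edges after the current operation *)
definition triest_step :: "nat \<Rightarrow> nat \<Rightarrow> 'v op \<Rightarrow> 'v state \<Rightarrow> 'v state pmf" where
  "triest_step M s x st =
    (case st of (S, di, dout) \<Rightarrow>
      (let e = op_edge x in
       if \<not> fst x then
         (if e \<in> S then return_pmf (S - {e}, Suc di, dout)
          else return_pmf (S, di, Suc dout))
       else if di + dout = 0 then
         (if card S < M then return_pmf (insert e S, di, dout)
          else do {
            b \<leftarrow> bernoulli_pmf (real M / real s);
            if b then do {
                f \<leftarrow> pmf_of_set S;
                return_pmf (insert e (S - {f}), di, dout) }
            else return_pmf (S, di, dout) })
       else do {
         b \<leftarrow> bernoulli_pmf (real di / real (di + dout));
         if b then return_pmf (insert e S, di - 1, dout)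
         else return_pmf (S, di, dout - 1) }))"

primrec triest_run :: "nat \<Rightarrow> 'v op list \<Rightarrow> nat \<Rightarrow> 'v state pmf" where
  "triest_run M \<sigma> 0 = return_pmf ({}, 0, 0)"
| "triest_run M \<sigma> (Suc t) =
     triest_run M \<sigma> t \<bind> triest_step M (card (graph_at \<sigma> (Suc t))) (\<sigma> ! t)"

(* kappa^(t); binomial coefficients with negative lower index are 0 *)
definition kappa :: "nat \<Rightarrow> nat \<Rightarrow> nat \<Rightarrow> real" where
  "kappa M s d =
    (let \<omega> = min M (s + d) in
     1 - (\<Sum>j\<in>{0..2::nat}. (if j \<le> \<omega> then real (s choose j) * real (d choose (\<omega> - j)) else 0))
           / real ((s + d) choose \<omega>))"

definition psi :: "nat \<Rightarrow> nat \<Rightarrow> nat \<Rightarrow> real" where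
  "psi a b c = real (c choose b) / real ((c - a) choose (b - a))"

definition rho :: "nat \<Rightarrow> nat \<Rightarrow> 'v state \<Rightarrow> real" where
  "rho M s st =
    (case st of (S, di, dout) \<Rightarrow>
      if card S < 3 then 0
      else real (tau st) / kappa M s (di + dout) * psi 3 (card S) s)"

end

theory Submission
  imports Defs
begin


primrec dcount :: "'v op list \<Rightarrow> nat \<Rightarrow> nat" where
  "dcount \<sigma> 0 = 0"
| "dcount \<sigma> (Suc t) = (if fst (\<sigma> ! t) then dcount \<sigma> t - 1 else Suc (dcount \<sigma> t))"

lemma finite_graph_at: "finite (graph_at \<sigma> t)"
  by (induction t) auto

lemma valid_ins: "valid_stream \<sigma> \<Longrightarrow> t < length \<sigma> \<Longrightarrow> fst (\<sigma> ! t) \<Longrightarrow>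
   op_edge (\<sigma> ! t) \<notin> graph_at \<sigma> t \<and> graph_at \<sigma> (Suc t) = insert (op_edge (\<sigma> ! t)) (graph_at \<sigma> t)"
  by (simp add: valid_stream_def)

lemma valid_del: "valid_stream \<sigma> \<Longrightarrow> t < length \<sigma> \<Longrightarrow> \<not> fst (\<sigma> ! t) \<Longrightarrow>
   op_edge (\<sigma> ! t) \<in> graph_at \<sigma> t \<and> graph_at \<sigma> (Suc t) = graph_at \<sigma> t - {op_edge (\<sigma> ! t)}"
  by (simp add: valid_stream_def)

definition P :: "'v op list \<Rightarrow> nat \<Rightarrow> nat" where
  "P \<sigma> t = card (graph_at \<sigma> t) + dcount \<sigma> t"

lemma P_step: assumes "valid_stream \<sigma>" "t < length \<sigma>"
  shows "P \<sigma> (Suc t) = P \<sigma> t \<or> (P \<sigma> (Suc t) = Suc (P \<sigma> t) \<and> dcount \<sigma> t = 0 \<and> dcount \<sigma> (Suc t) = 0)"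
proof (cases "fst (\<sigma> ! t)")
  case True
  with valid_ins[OF assms] show ?thesis using finite_graph_at[of \<sigma> t]
    by (auto simp: P_def)
next
  case False
  with valid_del[OF assms] show ?thesis using finite_graph_at[of \<sigma> t]
    by (auto simp: P_def card_Diff_singleton) (metis card_0_eq empty_iff finite_graph_at not_gr0 Suc_pred add_Suc)
qed

lemma P_mono: assumes "valid_stream \<sigma>" "t \<le> t'" "t' \<le> length \<sigma>" shows "P \<sigma> t \<le> P \<sigma> t'"
  using assms(2,3)
proof (induction t' rule: dec_induct)
  case (step n) then show ?case using P_step[OF assms(1), of n] by auto
qed simp

lemma P_le: assumes "valid_stream \<sigma>" "t \<le> length \<sigma>" shows "P \<sigma> t \<le> t"
  using assms(2)
proof (induction t)
  case (Suc t) then show ?case using P_step[OF assms(1), of t] by auto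
qed (simp add: P_def)

lemma P_hit: assumes "valid_stream \<sigma>" "t \<le> length \<sigma>" "P \<sigma> t > M"
  shows "\<exists>t'\<le>t. M + 1 \<le> t' \<and> card (graph_at \<sigma> t') = M + 1"
  using assms(2,3)
proof (induction t)
  case 0 then show ?case by (simp add: P_def)
next
  case (Suc t)
  show ?case
  proof (cases "P \<sigma> t > M")
    case True
    then obtain t' where "t' \<le> t" "M + 1 \<le> t' \<and> card (graph_at \<sigma> t') = M + 1" using Suc by auto
    then show ?thesis by (intro exI[of _ t']) auto
  next
    case False
    then have "P \<sigma> (Suc t) = Suc (P \<sigma> t) \<and> dcount \<sigma> (Suc t) = 0" using P_step[OF assms(1), of t] Suc by auto
    then have "card (graph_at \<sigma> (Suc t)) = M + 1" "P \<sigma> (Suc t) = M+1" using False Suc by (auto simp: P_def)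
    moreover have "P \<sigma> (Suc t) \<le> Suc t" using P_le[OF assms(1) Suc(2)] .
    ultimately show ?thesis by auto
  qed
qed

lemma P_ge_card: "card (graph_at \<sigma> t) \<le> P \<sigma> t" by (simp add: P_def)



definition Ps :: "nat \<Rightarrow> 'v set set \<Rightarrow> nat \<Rightarrow> ('v set set \<times> nat set) set" where
 "Ps M E D = {(A,B). A \<subseteq> E \<and> B \<subseteq> {..<D} \<and> card A + card B = M}"

definition fR :: "nat \<Rightarrow> ('v set set \<times> nat set) \<Rightarrow> 'v state" where
  "fR D x = (fst x, card (snd x), D - card (snd x))"

definition Phi :: "nat \<Rightarrow> 'v set set \<Rightarrow> nat \<Rightarrow> 'v state pmf" where
  "Phi M E D = map_pmf (fR D) (pmf_of_set (Ps M E D))"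

lemma Ps_finite: "finite E \<Longrightarrow> finite (Ps M E D)"
  by (rule finite_subset[of _ "Pow E \<times> Pow {..<D}"]) (auto simp: Ps_def)

lemma Ps_ne: assumes "finite E" "M \<le> card E + D" shows "Ps M E D \<noteq> {}"
proof -
  obtain A where A: "A \<subseteq> E" "card A = min M (card E)"
    using obtain_subset_with_card_n[of "min M (card E)" E] by auto
  have "({..<M - min M (card E)} :: nat set) \<subseteq> {..<D}" using assms by auto
  then have "(A, {..<M - min M (card E)}) \<in> Ps M E D" using A by (auto simp: Ps_def)
  then show ?thesis by auto
qed

lemma Ps_mem: "(A,B) \<in> Ps M E D \<longleftrightarrow> A \<subseteq> E \<and> B \<subseteq> {..<D} \<and> card A + card B = M"
  by (simp add: Ps_def)

lemma Phi_det: assumes "finite E" "card E + D = M" shows "Phi M E D = return_pmf (E, D, 0)"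
proof -
  have 1: "x = (E, {..<D})" if "x \<in> Ps M E D" for x
  proof -
    obtain A B where x: "x = (A,B)" by fastforce
    then have h: "A \<subseteq> E" "B \<subseteq> {..<D}" "card A + card B = M" using that by (auto simp: Ps_def)
    have "card A \<le> card E" "card B \<le> D" using h assms card_mono[of E A] card_mono[of "{..<D}" B] by auto
    then have "card A = card E" "card B = card {..<D}" using h assms by auto
    then have "A = E" "B = {..<D}" using h assms card_subset_eq by (metis finite_lessThan)+
    then show ?thesis using x by simp
  qed
  have "(E, {..<D}) \<in> Ps M E D" using assms by (auto simp: Ps_def)
  then have "Ps M E D = {(E, {..<D})}" using 1 by blast
  then show ?thesis by (simp add: Phi_def pmf_of_set_singleton fR_def)
qed

lemma bij_map_pmf_of_set:
  assumes "bij_betw h X Y" "finite X" "X \<noteq> {}"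
  shows "map_pmf h (pmf_of_set X) = pmf_of_set Y"
  using assms map_pmf_of_set_inj[of h X] by (auto simp: bij_betw_def)

definition delf :: "'v set \<Rightarrow> 'v state \<Rightarrow> 'v state" where
  "delf e st = (if e \<in> fst st then (fst st - {e}, Suc (fst (snd st)), snd (snd st))
               else (fst st, fst (snd st), Suc (snd (snd st))))"

definition hdel :: "'v set \<Rightarrow> nat \<Rightarrow> ('v set set \<times> nat set) \<Rightarrow> ('v set set \<times> nat set)" where
  "hdel e D x = (if e \<in> fst x then (fst x - {e}, insert D (snd x)) else x)"

definition hdel_inv :: "'v set \<Rightarrow> nat \<Rightarrow> ('v set set \<times> nat set) \<Rightarrow> ('v set set \<times> nat set)" where
  "hdel_inv e D x = (if D \<in> snd x then (insert e (fst x), snd x - {D}) else x)"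

lemma hdel_bij: assumes "finite E" "e \<in> E"
  shows "bij_betw (hdel e D) (Ps M E D) (Ps M (E - {e}) (Suc D))"
proof (rule bij_betw_byWitness[where f'="hdel_inv e D"])
  show "\<forall>a\<in>Ps M E D. hdel_inv e D (hdel e D a) = a"
    by (auto simp: Ps_def hdel_def hdel_inv_def insert_absorb)
  show "\<forall>a'\<in>Ps M (E - {e}) (Suc D). hdel e D (hdel_inv e D a') = a'"
    by (auto simp: Ps_def hdel_def hdel_inv_def insert_absorb)
  show "hdel e D ` Ps M E D \<subseteq> Ps M (E - {e}) (Suc D)"
  proof (rule image_subsetI)
    fix x assume x: "x \<in> Ps M E D"
    obtain A B where xe: "x = (A,B)" by fastforce
    from x[unfolded xe] have h: "A \<subseteq> E" "B \<subseteq> {..<D}" "card A + card B = M" by (auto simp: Ps_def)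
    have fA: "finite A" using h assms finite_subset by auto
    have fB: "finite B" using h finite_subset by auto
    have "D \<notin> B" using h by auto
    then show "hdel e D x \<in> Ps M (E - {e}) (Suc D)" unfolding xe using h fA fB
      by (cases "e \<in> A") (auto simp: Ps_def hdel_def card_Diff_singleton card_insert_if,
          metis Suc_pred card_gt_0_iff empty_iff add_Suc)
  qed
  show "hdel_inv e D ` Ps M (E - {e}) (Suc D) \<subseteq> Ps M E D"
  proof (rule image_subsetI)
    fix x assume x: "x \<in> Ps M (E - {e}) (Suc D)"
    obtain A B where xe: "x = (A,B)" by fastforce
    from x[unfolded xe] have h: "A \<subseteq> E - {e}" "B \<subseteq> {..<Suc D}" "card A + card B = M" by (auto simp: Ps_def)
    have fA: "finite A" using h(1) assms(1) by (meson Diff_subset finite_subset)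
    have fB: "finite B" using h finite_subset by auto
    have "e \<notin> A" using h by auto
    then show "hdel_inv e D x \<in> Ps M E D" unfolding xe using h fA fB assms
      by (cases "D \<in> B") (auto simp: Ps_def hdel_inv_def card_Diff_singleton card_insert_if less_Suc_eq,
          metis Suc_pred card_gt_0_iff empty_iff add_Suc_right)
  qed
qed

lemma Phi_del: assumes "finite E" "e \<in> E" "M \<le> card E + D"
  shows "map_pmf (delf e) (Phi M E D) = Phi M (E - {e}) (Suc D)"
proof -
  have "map_pmf (delf e) (Phi M E D) = map_pmf (delf e \<circ> fR D) (pmf_of_set (Ps M E D))"
    by (simp add: Phi_def pmf.map_comp)
  also have "\<dots> = map_pmf (fR (Suc D) \<circ> hdel e D) (pmf_of_set (Ps M E D))"
  proof (rule map_pmf_cong[OF refl])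
    fix x assume "x \<in> set_pmf (pmf_of_set (Ps M E D))"
    then have x: "x \<in> Ps M E D" using Ps_finite[OF assms(1)] Ps_ne[OF assms(1,3)] by auto
    obtain A B where [simp]: "x = (A,B)" by fastforce
    have h: "B \<subseteq> {..<D}" using x by (auto simp: Ps_def)
    then have fB: "finite B" "D \<notin> B" "card B \<le> D" using finite_subset card_mono[of "{..<D}" B] by auto
    then show "(delf e \<circ> fR D) x = (fR (Suc D) \<circ> hdel e D) x"
      by (auto simp: delf_def fR_def hdel_def Suc_diff_le)
  qed
  also have "\<dots> = map_pmf (fR (Suc D)) (map_pmf (hdel e D) (pmf_of_set (Ps M E D)))"
    by (simp add: pmf.map_comp)
  also have "\<dots> = Phi M (E - {e}) (Suc D)"
    unfolding Phi_def
    by (subst bij_map_pmf_of_set[OF hdel_bij[OF assms(1,2)] Ps_finite[OF assms(1)] Ps_ne[OF assms(1,3)]]) simp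
  finally show ?thesis .
qed



definition sw :: "nat \<Rightarrow> nat \<Rightarrow> nat \<Rightarrow> nat" where
  "sw D k x = (if x = k then D - 1 else if x = D - 1 then k else x)"

lemma sw_sw[simp]: "sw D k (sw D k x) = x" by (simp add: sw_def)

lemma sw_inj: "inj (sw D k)" by (metis injI sw_sw)

lemma sw_img_img[simp]: "sw D k ` sw D k ` B = B"
  by (simp add: image_image)

lemma sw_range: "k < D \<Longrightarrow> x < D \<Longrightarrow> sw D k x < D" by (auto simp: sw_def)

definition hins :: "'v set \<Rightarrow> nat \<Rightarrow> nat \<Rightarrow> ('v set set \<times> nat set) \<Rightarrow> ('v set set \<times> nat set)" where
  "hins e D k x = (if k \<in> snd x then insert e (fst x) else fst x, sw D k ` snd x - {D - 1})"

definition hins_inv :: "'v set \<Rightarrow> nat \<Rightarrow> nat \<Rightarrow> ('v set set \<times> nat set) \<Rightarrow> ('v set set \<times> nat set)" where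
  "hins_inv e D k x = (if e \<in> fst x then (fst x - {e}, sw D k ` insert (D - 1) (snd x)) else (fst x, sw D k ` snd x))"

lemma sw_mem: "sw D k x \<in> sw D k ` B \<longleftrightarrow> x \<in> B" using sw_inj[of D k] by (auto simp: inj_eq)

lemma sw_mem2: "y \<in> sw D k ` B \<longleftrightarrow> sw D k y \<in> B"
  by (metis sw_mem sw_sw)

lemma card_sw: "finite B \<Longrightarrow> card (sw D k ` B) = card B"
  using sw_inj card_image by (metis inj_on_subset subset_UNIV)

lemma hins_bij: assumes "finite E" "e \<notin> E" "k < D"
  shows "bij_betw (hins e D k) (Ps M E D) (Ps M (insert e E) (D - 1))"
proof (rule bij_betw_byWitness[where f'="hins_inv e D k"])
  have swk: "sw D k k = D - 1" "sw D k (D - 1) = k" by (auto simp: sw_def)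
  show "\<forall>a\<in>Ps M E D. hins_inv e D k (hins e D k a) = a"
  proof
    fix x assume x: "x \<in> Ps M E D"
    obtain A B where xe: "x = (A,B)" by fastforce
    have h: "A \<subseteq> E" "B \<subseteq> {..<D}" using x xe by (auto simp: Ps_def)
    have eA: "e \<notin> A" using h assms by auto
    show "hins_inv e D k (hins e D k x) = x"
    proof (cases "k \<in> B")
      case True
      have "insert (D - 1) (sw D k ` B - {D - 1}) = sw D k ` B" using True swk
        by (metis insert_Diff sw_mem)
      then show ?thesis using True eA xe by (simp add: hins_def hins_inv_def)
    next
      case False
      have "D - 1 \<notin> sw D k ` B" using False swk by (metis sw_mem)
      then show ?thesis using False eA xe by (simp add: hins_def hins_inv_def)
    qed
  qed
  show "\<forall>a'\<in>Ps M (insert e E) (D - 1). hins e D k (hins_inv e D k a') = a'"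
  proof
    fix x assume x: "x \<in> Ps M (insert e E) (D - 1)"
    obtain A B where xe: "x = (A,B)" by fastforce
    have h: "A \<subseteq> insert e E" "B \<subseteq> {..<D - 1}" using x xe by (auto simp: Ps_def)
    have D1: "D - 1 \<notin> B" using h by auto
    show "hins e D k (hins_inv e D k x) = x"
    proof (cases "e \<in> A")
      case True
      have "k \<in> sw D k ` insert (D - 1) B" using swk by (metis insertI1 sw_mem)
      then show ?thesis using True xe D1 by (simp add: hins_def hins_inv_def image_image insert_absorb)
    next
      case False
      have "k \<notin> sw D k ` B" using swk D1 by (metis sw_mem)
      then show ?thesis using False xe D1 by (simp add: hins_def hins_inv_def image_image)
    qed
  qed
  show "hins e D k ` Ps M E D \<subseteq> Ps M (insert e E) (D - 1)"
  proof (rule image_subsetI)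
    fix x assume x: "x \<in> Ps M E D"
    obtain A B where xe: "x = (A,B)" by fastforce
    have h: "A \<subseteq> E" "B \<subseteq> {..<D}" "card A + card B = M" using x xe by (auto simp: Ps_def)
    have fA: "finite A" using h assms finite_subset by auto
    have fB: "finite B" using h(2) finite_subset by blast
    have eA: "e \<notin> A" using h assms by auto
    have sub: "sw D k ` B - {D - 1} \<subseteq> {..<D - 1}"
    proof
      fix y assume y: "y \<in> sw D k ` B - {D - 1}"
      then obtain z where z: "z \<in> B" "y = sw D k z" by blast
      have "z < D" using z h(2) by blast
      then have "y < D" using z(2) sw_range[OF assms(3)] by blast
      then show "y \<in> {..<D - 1}" using y by auto
    qed
    have mem: "(D - 1 \<in> sw D k ` B) = (k \<in> B)" using sw_mem2[of "D - 1" D k B] swk by simp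
    have c: "card (sw D k ` B - {D - 1}) = (if k \<in> B then card B - 1 else card B)"
      unfolding card_Diff_singleton_if mem card_sw[OF fB] by simp
    show "hins e D k x \<in> Ps M (insert e E) (D - 1)"
    proof (cases "k \<in> B")
      case True
      then have "card B > 0" using fB card_gt_0_iff by blast
      then show ?thesis using True c sub h fA eA xe by (auto simp: hins_def Ps_def)
    next
      case False
      then show ?thesis using c sub h fA eA xe by (auto simp: hins_def Ps_def)
    qed
  qed
  show "hins_inv e D k ` Ps M (insert e E) (D - 1) \<subseteq> Ps M E D"
  proof (rule image_subsetI)
    fix x assume x: "x \<in> Ps M (insert e E) (D - 1)"
    obtain A B where xe: "x = (A,B)" by fastforce
    have h: "A \<subseteq> insert e E" "B \<subseteq> {..<D - 1}" "card A + card B = M" using x xe by (auto simp: Ps_def)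
    have fA: "finite A" using h(1) assms(1) by (meson finite_insert finite_subset)
    have fB: "finite B" using h(2) finite_subset by blast
    have D1: "D - 1 \<notin> B" using h by auto
    have sub2: "sw D k ` B \<subseteq> {..<D}"
    proof
      fix y assume y: "y \<in> sw D k ` B"
      then obtain z where z: "z \<in> B" "y = sw D k z" by blast
      have "z < D" using z h(2) by auto
      then show "y \<in> {..<D}" using z(2) sw_range[OF assms(3)] by blast
    qed
    have sub1: "sw D k ` insert (D - 1) B \<subseteq> {..<D}"
      using sub2 sw_range[OF assms(3), of "D - 1"] assms(3) by auto
    have c1: "card (sw D k ` insert (D - 1) B) = Suc (card B)"
      using card_sw[of "insert (D - 1) B" D k] fB D1 by simp
    have c2: "card (sw D k ` B) = card B" using card_sw[OF fB] .
    show "hins_inv e D k x \<in> Ps M E D"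
    proof (cases "e \<in> A")
      case True
      then have "card A > 0" using fA card_gt_0_iff by blast
      then show ?thesis using True c1 sub1 h fA xe by (auto simp: hins_inv_def Ps_def card_Diff_singleton)
    next
      case False
      then show ?thesis using c2 sub2 h fA xe by (auto simp: hins_inv_def Ps_def)
    qed
  qed
qed



lemma bern_map: assumes "B \<subseteq> {..<D}" "0 < D"
  shows "map_pmf (\<lambda>k. k \<in> B) (pmf_of_set {..<D}) = bernoulli_pmf (real (card B) / real D)"
proof (rule pmf_eqI)
  fix b :: bool
  have fB: "finite B" using assms finite_subset by blast
  have cB: "card B \<le> D" using card_mono[OF _ assms(1)] by simp
  have ne: "{..<D} \<noteq> {}" using assms by auto
  have p: "0 \<le> real (card B) / real D" "real (card B) / real D \<le> 1" using cB assms by auto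
  show "pmf (map_pmf (\<lambda>k. k \<in> B) (pmf_of_set {..<D})) b = pmf (bernoulli_pmf (real (card B) / real D)) b"
  proof (cases b)
    case True
    have "{..<D} \<inter> (\<lambda>k. k \<in> B) -` {b} = B" using True assms by auto
    then show ?thesis using True p ne by (simp add: pmf_map measure_pmf_of_set)
  next
    case False
    have "{..<D} \<inter> (\<lambda>k. k \<in> B) -` {b} = {..<D} - B" using False assms by auto
    moreover have "card ({..<D} - B) = D - card B" using assms(1) fB by (simp add: card_Diff_subset)
    ultimately show ?thesis using False p ne cB assms by (simp add: pmf_map measure_pmf_of_set of_nat_diff field_simps)
  qed
qed

definition pairstep :: "'v set \<Rightarrow> 'v state \<Rightarrow> 'v state pmf" where
  "pairstep e st = (case st of (S, di, dout) \<Rightarrow> do {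
         b \<leftarrow> bernoulli_pmf (real di / real (di + dout));
         if b then return_pmf (insert e S, di - 1, dout)
         else return_pmf (S, di, dout - 1) })"

lemma pairstep_eq: assumes "x \<in> Ps M E D" "0 < D"
  shows "pairstep e (fR D x) = map_pmf (\<lambda>k. fR (D - 1) (hins e D k x)) (pmf_of_set {..<D})"
proof -
  obtain A B where xe: "x = (A,B)" by fastforce
  have h: "B \<subseteq> {..<D}" using assms xe by (auto simp: Ps_def)
  have fB: "finite B" using h finite_subset by blast
  have cB: "card B \<le> D" using card_mono[OF _ h] by simp
  have swk: "sw D k k = D - 1" "sw D k (D - 1) = k" for k by (auto simp: sw_def)
  have "pairstep e (fR D x) = bernoulli_pmf (real (card B) / real D) \<bind>
       (\<lambda>b. return_pmf (if b then (insert e A, card B - 1, D - card B) else (A, card B, D - card B - 1)))"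
    using cB by (auto simp: pairstep_def fR_def xe intro!: bind_pmf_cong)
  also have "\<dots> = map_pmf (\<lambda>b. if b then (insert e A, card B - 1, D - card B) else (A, card B, D - card B - 1))
        (map_pmf (\<lambda>k. k \<in> B) (pmf_of_set {..<D}))"
    by (subst bern_map[OF h assms(2)]) (simp add: map_pmf_def)
  also have "\<dots> = map_pmf (\<lambda>k. fR (D - 1) (hins e D k x)) (pmf_of_set {..<D})"
    unfolding map_pmf_comp
  proof (rule map_pmf_cong[OF refl])
    fix k assume k0: "k \<in> set_pmf (pmf_of_set {..<D})"
    have "set_pmf (pmf_of_set {..<D}) = {..<D}" using assms(2) by (intro set_pmf_of_set) auto
    then have k: "k < D" using k0 by auto
    have mem: "(D - 1 \<in> sw D k ` B) = (k \<in> B)" using sw_mem2[of "D - 1" D k B] swk by simp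
    have c: "card (sw D k ` B - {D - 1}) = (if k \<in> B then card B - 1 else card B)"
      unfolding card_Diff_singleton_if mem card_sw[OF fB] by simp
    show "(if k \<in> B then (insert e A, card B - 1, D - card B) else (A, card B, D - card B - 1)) =
          fR (D - 1) (hins e D k x)"
    proof (cases "k \<in> B")
      case True
      then have "card B > 0" using fB card_gt_0_iff by blast
      then show ?thesis using True c cB by (simp add: fR_def hins_def xe)
    next
      case False
      then show ?thesis using c by (simp add: fR_def hins_def xe)
    qed
  qed
  finally show ?thesis .
qed

lemma Phi_pair: assumes "finite E" "e \<notin> E" "0 < D" "M \<le> card E + D"
  shows "Phi M E D \<bind> pairstep e = Phi M (insert e E) (D - 1)"
proof -
  have fin: "finite (Ps M E D)" and ne: "Ps M E D \<noteq> {}" using Ps_finite[OF assms(1)] Ps_ne[OF assms(1,4)] by auto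
  have "Phi M E D \<bind> pairstep e = pmf_of_set (Ps M E D) \<bind> (\<lambda>x. pairstep e (fR D x))"
    by (simp add: Phi_def bind_map_pmf)
  also have "\<dots> = pmf_of_set (Ps M E D) \<bind> (\<lambda>x. pmf_of_set {..<D} \<bind> (\<lambda>k. return_pmf (fR (D - 1) (hins e D k x))))"
    using fin ne by (intro bind_pmf_cong refl) (simp add: pairstep_eq[OF _ assms(3)] map_pmf_def)
  also have "\<dots> = pmf_of_set {..<D} \<bind> (\<lambda>k. pmf_of_set (Ps M E D) \<bind> (\<lambda>x. return_pmf (fR (D - 1) (hins e D k x))))"
    by (rule bind_commute_pmf)
  also have "\<dots> = pmf_of_set {..<D} \<bind> (\<lambda>k. Phi M (insert e E) (D - 1))"
  proof (intro bind_pmf_cong refl)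
    fix k assume k0: "k \<in> set_pmf (pmf_of_set {..<D})"
    have "set_pmf (pmf_of_set {..<D}) = {..<D}" using assms(3) by (intro set_pmf_of_set) auto
    then have k: "k < D" using k0 by auto
    have "pmf_of_set (Ps M E D) \<bind> (\<lambda>x. return_pmf (fR (D - 1) (hins e D k x)))
        = map_pmf (fR (D - 1)) (map_pmf (hins e D k) (pmf_of_set (Ps M E D)))"
      by (simp add: map_pmf_def bind_assoc_pmf bind_return_pmf)
    also have "\<dots> = Phi M (insert e E) (D - 1)"
      unfolding Phi_def by (subst bij_map_pmf_of_set[OF hins_bij[OF assms(1,2) k] fin ne]) simp
    finally show "pmf_of_set (Ps M E D) \<bind> (\<lambda>x. return_pmf (fR (D - 1) (hins e D k x))) = Phi M (insert e E) (D - 1)" .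
  qed
  also have "\<dots> = Phi M (insert e E) (D - 1)" by simp
  finally show ?thesis .
qed



definition Ss :: "nat \<Rightarrow> 'a set \<Rightarrow> 'a set set" where
  "Ss M E = {A. A \<subseteq> E \<and> card A = M}"

definition resK :: "nat \<Rightarrow> nat \<Rightarrow> 'a \<Rightarrow> 'a set \<Rightarrow> 'a set pmf" where
  "resK M s e A = bernoulli_pmf (real M / real s) \<bind>
     (\<lambda>b. if b then pmf_of_set A \<bind> (\<lambda>f. return_pmf (insert e (A - {f}))) else return_pmf A)"

lemma Ss_finite: "finite E \<Longrightarrow> finite (Ss M E)"
  by (rule finite_subset[of _ "Pow E"]) (auto simp: Ss_def)

lemma card_Ss: "finite E \<Longrightarrow> card (Ss M E) = card E choose M"
  by (simp add: Ss_def n_subsets)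

lemma Ss_ne: "finite E \<Longrightarrow> M \<le> card E \<Longrightarrow> Ss M E \<noteq> {}"
  using card_Ss[of E M] by (metis card.empty zero_less_binomial_iff not_gr0)

lemma pmf_resK: assumes "finite A" "card A = M" "0 < M" "M \<le> s"
  shows "pmf (resK M s e A) Y = real M / real s * (real (card {f\<in>A. insert e (A - {f}) = Y}) / real M)
          + (1 - real M / real s) * (if A = Y then 1 else 0)"
proof -
  have p: "0 \<le> real M / real s" "real M / real s \<le> 1" using assms by auto
  have ne: "A \<noteq> {}" using assms by auto
  have "pmf (pmf_of_set A \<bind> (\<lambda>f. return_pmf (insert e (A - {f})))) Y
      = (\<Sum>f\<in>A. indicator {Y} (insert e (A - {f}))) / real (card A)"
    by (simp add: pmf_bind_pmf_of_set[OF ne assms(1)])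
  also have "(\<Sum>f\<in>A. indicator {Y} (insert e (A - {f})) :: real) = real (card {f\<in>A. insert e (A - {f}) = Y})"
  proof -
    have "(\<Sum>f\<in>A. indicator {Y} (insert e (A - {f})) :: real) = (\<Sum>f\<in>A. if insert e (A - {f}) = Y then 1 else 0)"
      by (intro sum.cong) (auto simp: indicator_def)
    also have "\<dots> = (\<Sum>f\<in>{f\<in>A. insert e (A - {f}) = Y}. 1)"
      using assms(1) by (rule sum.inter_filter[symmetric])
    finally show ?thesis by simp
  qed
  finally have 1: "pmf (pmf_of_set A \<bind> (\<lambda>f. return_pmf (insert e (A - {f})))) Y
      = real (card {f\<in>A. insert e (A - {f}) = Y}) / real M" using assms by simp
  have "pmf (resK M s e A) Y = (\<integral>b. pmf (if b then pmf_of_set A \<bind> (\<lambda>f. return_pmf (insert e (A - {f}))) else return_pmf A) Y \<partial>measure_pmf (bernoulli_pmf (real M / real s)))"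
    unfolding resK_def pmf_bind ..
  also have "\<dots> = pmf (pmf_of_set A \<bind> (\<lambda>f. return_pmf (insert e (A - {f})))) Y * (real M / real s) + pmf (return_pmf A) Y * (1 - real M / real s)"
    by (subst integral_bernoulli_pmf[OF p]) simp
  finally show ?thesis unfolding 1 by (simp add: pmf_return indicator_def mult.commute)
qed

lemma cnt_lemma: assumes "finite E" "e \<notin> E" "0 < M"
  shows "(\<Sum>A\<in>Ss M E. card {f\<in>A. insert e (A - {f}) = Y}) =
           (if e \<in> Y \<and> Y \<in> Ss M (insert e E) then card E + 1 - M else 0)"
proof -
  have fin: "\<forall>A\<in>Ss M E. finite {f\<in>A. insert e (A - {f}) = Y}"
    using assms(1) by (auto simp: Ss_def intro: finite_subset)
  have "(\<Sum>A\<in>Ss M E. card {f\<in>A. insert e (A - {f}) = Y}) = card (SIGMA A:Ss M E. {f\<in>A. insert e (A - {f}) = Y})"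
    using card_SigmaI[OF Ss_finite[OF assms(1)] fin] by simp
  also have "\<dots> = (if e \<in> Y \<and> Y \<in> Ss M (insert e E) then card E + 1 - M else 0)"
  proof (cases "e \<in> Y \<and> Y \<in> Ss M (insert e E)")
    case True
    then have Y: "e \<in> Y" "Y \<subseteq> insert e E" "card Y = M" by (auto simp: Ss_def)
    have fY: "finite Y" using Y(2) assms(1) finite_subset by blast
    have "(SIGMA A:Ss M E. {f\<in>A. insert e (A - {f}) = Y}) = (\<lambda>f. (insert f (Y - {e}), f)) ` (E - Y)"
    proof (intro equalityI subsetI)
      fix x assume x: "x \<in> (SIGMA A:Ss M E. {f\<in>A. insert e (A - {f}) = Y})"
      obtain A f where xe: "x = (A,f)" by fastforce
      have A: "A \<in> Ss M E" "f \<in> A" "Y = insert e (A - {f})" using x xe by auto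
      have "A \<subseteq> E" using A by (auto simp: Ss_def)
      then have "f \<in> E" "f \<noteq> e" "f \<notin> Y" using A assms(2) by auto
      moreover have "A = insert f (Y - {e})" using A \<open>A \<subseteq> E\<close> assms(2) by auto
      ultimately show "x \<in> (\<lambda>f. (insert f (Y - {e}), f)) ` (E - Y)" using xe by auto
    next
      fix x assume x: "x \<in> (\<lambda>f. (insert f (Y - {e}), f)) ` (E - Y)"
      then obtain f where xe: "x = (insert f (Y - {e}), f)" and f: "f \<in> E" "f \<notin> Y" by auto
      have fe: "f \<noteq> e" using f assms by auto
      have "Y - {e} \<subseteq> E" using Y by auto
      moreover have "card (insert f (Y - {e})) = M"
        using f fY Y assms(3) by (simp add: card_insert_if card_Diff_singleton)
      ultimately have "insert f (Y - {e}) \<in> Ss M E" using f by (auto simp: Ss_def)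
      moreover have "insert e (insert f (Y - {e}) - {f}) = Y" using f fe Y by auto
      ultimately show "x \<in> (SIGMA A:Ss M E. {f\<in>A. insert e (A - {f}) = Y})" using xe by auto
    qed
    moreover have "card ((\<lambda>f. (insert f (Y - {e}), f)) ` (E - Y)) = card (E - Y)"
      by (rule card_image) (auto simp: inj_on_def)
    moreover have "card (E - Y) = card E + 1 - M"
    proof -
      have EY: "E - Y = E - (Y - {e})" using assms(2) by auto
      have sub: "Y - {e} \<subseteq> E" using Y by auto
      have cY: "card (Y - {e}) = M - 1" using Y fY by (simp add: card_Diff_singleton)
      have "card (E - Y) = card E - (M - 1)" unfolding EY card_Diff_subset[OF finite_subset[OF sub assms(1)] sub] cY ..
      then show ?thesis using assms(3) card_mono[OF assms(1) sub] cY by simp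
    qed
    ultimately show ?thesis using True by simp
  next
    case False
    have "(SIGMA A:Ss M E. {f\<in>A. insert e (A - {f}) = Y}) = {}"
    proof safe
      fix A f assume A: "A \<in> Ss M E" "f \<in> A" "Y = insert e (A - {f})"
      have AE: "A \<subseteq> E" "card A = M" using A by (auto simp: Ss_def)
      have fA: "finite A" using AE assms(1) finite_subset by blast
      have "e \<notin> A - {f}" using AE assms by auto
      then have "card Y = M" using A AE fA assms(3) by (simp add: card_Diff_singleton)
      then have "e \<in> Y \<and> Y \<in> Ss M (insert e E)" using A AE by (auto simp: Ss_def)
      then show "(A, f) \<in> {}" using False by simp
    qed
    then show ?thesis by (subst if_not_P[OF False]) simp
  qed
  finally show ?thesis .
qed

lemma reservoir: assumes "finite E" "e \<notin> E" "0 < M" "M \<le> card E"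
  shows "pmf_of_set (Ss M E) \<bind> resK M (card E + 1) e = pmf_of_set (Ss M (insert e E))"
proof (rule pmf_eqI)
  fix Y
  define s where "s = card E"
  define p where "p = real M / real (s + 1)"
  have fin: "finite (Ss M E)" and ne: "Ss M E \<noteq> {}" using Ss_finite[OF assms(1)] Ss_ne[OF assms(1,4)] by auto
  have fin': "finite (Ss M (insert e E))" and ne': "Ss M (insert e E) \<noteq> {}"
    using Ss_finite[of "insert e E"] Ss_ne[of "insert e E" M] assms by auto
  have cE': "card (insert e E) = s + 1" using assms s_def by simp
  have N: "real (card (Ss M E)) = real (s choose M)" using card_Ss[OF assms(1)] s_def by simp
  have N': "real (card (Ss M (insert e E))) = real ((s + 1) choose M)" using card_Ss[of "insert e E" M] assms cE' by simp
  have absorb: "real (s + 1 - M) * real ((s + 1) choose M) = real (s + 1) * real (s choose M)"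
    using binomial_absorb_comp[of "s + 1" M] by (metis of_nat_mult diff_Suc_1 Suc_eq_plus1)
  have Npos: "real (s choose M) > 0" "real ((s+1) choose M) > 0" using assms s_def by auto
  have "pmf (pmf_of_set (Ss M E) \<bind> resK M (card E + 1) e) Y
      = (\<Sum>A\<in>Ss M E. pmf (resK M (s + 1) e A) Y) / real (card (Ss M E))"
    by (simp add: pmf_bind_pmf_of_set[OF ne fin] s_def)
  also have "(\<Sum>A\<in>Ss M E. pmf (resK M (s + 1) e A) Y)
      = (\<Sum>A\<in>Ss M E. p / real M * real (card {f\<in>A. insert e (A - {f}) = Y}) + (1 - p) * (if A = Y then 1 else 0))"
  proof (rule sum.cong[OF refl])
    fix A assume "A \<in> Ss M E"
    then have "finite A" "card A = M" using assms(1) finite_subset by (auto simp: Ss_def)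
    then show "pmf (resK M (s + 1) e A) Y = p / real M * real (card {f\<in>A. insert e (A - {f}) = Y}) + (1 - p) * (if A = Y then 1 else 0)"
      using pmf_resK[of A M "s+1" e Y] assms s_def by (simp add: p_def)
  qed
  also have "\<dots> = p / real M * (\<Sum>A\<in>Ss M E. real (card {f\<in>A. insert e (A - {f}) = Y})) + (1 - p) * (\<Sum>A\<in>Ss M E. (if A = Y then 1 else 0))"
    by (simp only: sum.distrib sum_distrib_left)
  also have "\<dots> = p / real M * real (\<Sum>A\<in>Ss M E. card {f\<in>A. insert e (A - {f}) = Y}) + (1 - p) * (if Y \<in> Ss M E then 1 else 0)"
    using fin by (simp add: sum.delta)
  also have "\<dots> = p / real M * real (if e \<in> Y \<and> Y \<in> Ss M (insert e E) then s + 1 - M else 0) + (1 - p) * (if Y \<in> Ss M E then 1 else 0)"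
    using cnt_lemma[OF assms(1-3), of Y] s_def by simp
  finally have L: "pmf (pmf_of_set (Ss M E) \<bind> resK M (card E + 1) e) Y =
      (p / real M * real (if e \<in> Y \<and> Y \<in> Ss M (insert e E) then s + 1 - M else 0) + (1 - p) * (if Y \<in> Ss M E then 1 else 0)) / real (s choose M)"
    using N by simp
  have R: "pmf (pmf_of_set (Ss M (insert e E))) Y = (if Y \<in> Ss M (insert e E) then 1 else 0) / real ((s + 1) choose M)"
    using fin' ne' N' by (simp add: indicator_def)
  have Ms: "M \<le> s" using assms s_def by simp
  have key: "(1 - p) / real (s choose M) = 1 / real ((s + 1) choose M)"
  proof -
    have "1 - p = real (s + 1 - M) / real (s + 1)" using Ms by (simp add: p_def field_simps of_nat_diff)
    then have "(1 - p) / real (s choose M) = real (s + 1 - M) / (real (s + 1) * real (s choose M))"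
      by simp
    also have "\<dots> = real (s + 1 - M) / (real (s + 1 - M) * real ((s + 1) choose M))"
      using absorb by simp
    also have "\<dots> = 1 / real ((s + 1) choose M)"
      using Ms by simp
    finally show ?thesis .
  qed
  show "pmf (pmf_of_set (Ss M E) \<bind> resK M (card E + 1) e) Y = pmf (pmf_of_set (Ss M (insert e E))) Y"
  proof (cases "e \<in> Y")
    case True
    have "Y \<notin> Ss M E" using True assms by (auto simp: Ss_def)
    moreover have "p / real M * real (s + 1 - M) = 1 - p"
    proof -
      have a: "p / real M = 1 / real (s + 1)" using assms(3) by (simp add: p_def)
      have b: "1 - p = real (s + 1 - M) / real (s + 1)" using Ms by (simp add: p_def field_simps of_nat_diff)
      show ?thesis unfolding a b by simp
    qed
    ultimately have nY: "Y \<notin> Ss M E" and eqn: "p / real M * real (s + 1 - M) = 1 - p" by auto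
    show ?thesis
    proof (cases "Y \<in> Ss M (insert e E)")
      case Y': True
      have "pmf (pmf_of_set (Ss M E) \<bind> resK M (card E + 1) e) Y = (p / real M * real (s + 1 - M)) / real (s choose M)"
        unfolding L using True nY Y' by simp
      also have "\<dots> = (1 - p) / real (s choose M)" unfolding eqn ..
      also have "\<dots> = 1 / real ((s + 1) choose M)" using key .
      also have "\<dots> = pmf (pmf_of_set (Ss M (insert e E))) Y" unfolding R using Y' by simp
      finally show ?thesis .
    next
      case False
      then show ?thesis unfolding L R using nY by simp
    qed
  next
    case False
    then have "(Y \<in> Ss M E) = (Y \<in> Ss M (insert e E))" by (auto simp: Ss_def)
    then show ?thesis unfolding L R using False key by auto
  qed
qed



lemma ts_del: "\<not> fst x \<Longrightarrow> triest_step M s x st = return_pmf (delf (op_edge x) st)"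
  by (cases st) (auto simp: triest_step_def delf_def Let_def)

lemma ts_pair: "fst x \<Longrightarrow> 0 < fst (snd st) + snd (snd st) \<Longrightarrow> triest_step M s x st = pairstep (op_edge x) st"
  by (cases st) (auto simp: triest_step_def pairstep_def Let_def)

lemma ts_small: "fst x \<Longrightarrow> card S < M \<Longrightarrow> triest_step M s x (S, 0, 0) = return_pmf (insert (op_edge x) S, 0, 0)"
  by (auto simp: triest_step_def Let_def)

lemma ts_full: "fst x \<Longrightarrow> card S = M \<Longrightarrow> triest_step M s x (S, 0, 0) = map_pmf (\<lambda>A. (A, 0::nat, 0::nat)) (resK M s (op_edge x) S)"
  by (auto simp: triest_step_def Let_def resK_def map_bind_pmf intro!: bind_pmf_cong)

lemma bern1: "bernoulli_pmf 1 = return_pmf True"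
proof (rule pmf_eqI)
  fix i show "pmf (bernoulli_pmf 1) i = pmf (return_pmf True) i"
    by (cases i) (simp_all add: indicator_def)
qed

lemma set_Phi: "finite E \<Longrightarrow> M \<le> card E + D \<Longrightarrow> set_pmf (Phi M E D) = fR D ` Ps M E D"
  using Ps_finite[of E M D] Ps_ne[of E M D] by (simp add: Phi_def)

lemma Phi_zero: assumes "finite E" "M \<le> card E"
  shows "Phi M E 0 = map_pmf (\<lambda>A. (A, 0, 0)) (pmf_of_set (Ss M E))"
proof -
  have eq: "Ps M E 0 = (\<lambda>A. (A, {})) ` Ss M E" by (auto simp: Ps_def Ss_def)
  have "Phi M E 0 = map_pmf (fR 0) (map_pmf (\<lambda>A. (A, {})) (pmf_of_set (Ss M E)))"
    unfolding Phi_def eq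
    by (subst map_pmf_of_set_inj) (auto simp: inj_on_def Ss_finite[OF assms(1)] Ss_ne[OF assms])
  then show ?thesis by (simp add: pmf.map_comp o_def fR_def)
qed

lemma Phi_supp_d: assumes "finite E" "M \<le> card E + D" "st \<in> set_pmf (Phi M E D)"
  shows "fst (snd st) + snd (snd st) = D"
proof -
  obtain y where y: "y \<in> Ps M E D" "st = fR D y" using assms set_Phi by blast
  obtain A B where yAB: "y = (A,B)" by fastforce
  then have "B \<subseteq> {..<D}" using y by (auto simp: Ps_def)
  then have "card B \<le> D" using card_mono[of "{..<D}" B] by simp
  then show ?thesis using y yAB by (simp add: fR_def)
qed

lemma inv: assumes "valid_stream \<sigma>" "0 < M"
  shows "t \<le> length \<sigma> \<Longrightarrow>
    (P \<sigma> t \<le> M \<longrightarrow> triest_run M \<sigma> t = return_pmf (graph_at \<sigma> t, dcount \<sigma> t, 0)) \<and>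
    (M \<le> P \<sigma> t \<longrightarrow> triest_run M \<sigma> t = Phi M (graph_at \<sigma> t) (dcount \<sigma> t))"
proof (induction t)
  case 0
  then show ?case using assms(2) by (simp add: P_def)
next
  case (Suc t)
  have t: "t < length \<sigma>" using Suc by simp
  define E where "E = graph_at \<sigma> t"
  define D where "D = dcount \<sigma> t"
  define x where "x = \<sigma> ! t"
  define e where "e = op_edge x"
  define G where "G = graph_at \<sigma> (Suc t)"
  define D' where "D' = dcount \<sigma> (Suc t)"
  have fE: "finite E" unfolding E_def by (rule finite_graph_at)
  have fG: "finite G" unfolding G_def by (rule finite_graph_at)
  have IH: "P \<sigma> t \<le> M \<Longrightarrow> triest_run M \<sigma> t = return_pmf (E, D, 0)"
           "M \<le> P \<sigma> t \<Longrightarrow> triest_run M \<sigma> t = Phi M E D"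
    using Suc t by (auto simp: E_def D_def)
  have run: "triest_run M \<sigma> (Suc t) = triest_run M \<sigma> t \<bind> triest_step M (card G) x"
    by (simp add: G_def x_def)
  have PE: "P \<sigma> t = card E + D" "P \<sigma> (Suc t) = card G + D'" by (simp_all add: P_def E_def D_def G_def D'_def)
  have Pst: "P \<sigma> (Suc t) \<le> Suc (P \<sigma> t)" "P \<sigma> t \<le> P \<sigma> (Suc t)" using P_step[OF assms(1) t] by auto
  have det: "Phi M G D' = return_pmf (G, D', 0)" if "P \<sigma> (Suc t) = M"
    using Phi_det[OF fG, of D' M] that PE by simp
  show ?case
  proof (cases "P \<sigma> t < M")
    case True
    then have r0: "triest_run M \<sigma> t = return_pmf (E, D, 0)" using IH by simp
    have main: "triest_run M \<sigma> (Suc t) = return_pmf (G, D', 0)"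
    proof (cases "fst x")
      case False
      have v: "e \<in> E" "G = E - {e}" using valid_del[OF assms(1) t] False by (simp_all add: e_def x_def E_def G_def)
      have "D' = Suc D" using False by (simp add: D'_def D_def x_def)
      then show ?thesis unfolding run r0 bind_return_pmf ts_del[OF False] using v by (simp add: e_def[symmetric] delf_def)
    next
      case ins: True
      have v: "e \<notin> E" "G = insert e E" using valid_ins[OF assms(1) t] ins by (simp_all add: e_def x_def E_def G_def)
      have D'D: "D' = D - 1" using ins by (simp add: D'_def D_def x_def)
      show ?thesis
      proof (cases "D = 0")
        case True
        then have "card E < M" using \<open>P \<sigma> t < M\<close> PE by simp
        then show ?thesis unfolding run r0 bind_return_pmf using True ts_small[OF ins] v D'D
          by (simp add: e_def)
      next
        case False
        then show ?thesis unfolding run r0 bind_return_pmf using ts_pair[OF ins, of "(E, D, 0)"] v D'D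
          by (simp add: e_def[symmetric] pairstep_def bern1 bind_return_pmf)
      qed
    qed
    show ?thesis
    proof (intro conjI impI)
      show "triest_run M \<sigma> (Suc t) = return_pmf (graph_at \<sigma> (Suc t), dcount \<sigma> (Suc t), 0)"
        using main by (simp add: G_def D'_def)
      assume "M \<le> P \<sigma> (Suc t)"
      then have "P \<sigma> (Suc t) = M" using True Pst by simp
      then show "triest_run M \<sigma> (Suc t) = Phi M (graph_at \<sigma> (Suc t)) (dcount \<sigma> (Suc t))"
        using main det by (simp add: G_def D'_def)
    qed
  next
    case False
    then have r0: "triest_run M \<sigma> t = Phi M E D" and ME: "M \<le> card E + D" using IH PE by simp_all
    have main: "triest_run M \<sigma> (Suc t) = Phi M G D'"
    proof (cases "fst x")
      case del: False
      have v: "e \<in> E" "G = E - {e}" using valid_del[OF assms(1) t] del by (simp_all add: e_def x_def E_def G_def)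
      have "D' = Suc D" using del by (simp add: D'_def D_def x_def)
      moreover have "Phi M E D \<bind> triest_step M (card G) x = map_pmf (delf e) (Phi M E D)"
        unfolding ts_del[OF del] map_pmf_def e_def ..
      ultimately show ?thesis unfolding run r0 using Phi_del[OF fE v(1) ME] v by simp
    next
      case ins: True
      have v: "e \<notin> E" "G = insert e E" using valid_ins[OF assms(1) t] ins by (simp_all add: e_def x_def E_def G_def)
      have D'D: "D' = D - 1" using ins by (simp add: D'_def D_def x_def)
      show ?thesis
      proof (cases "D = 0")
        case False
        have "Phi M E D \<bind> triest_step M (card G) x = Phi M E D \<bind> pairstep e"
        proof (intro bind_pmf_cong refl)
          fix st assume "st \<in> set_pmf (Phi M E D)"
          then have "fst (snd st) + snd (snd st) = D" using Phi_supp_d[OF fE ME] by blast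
          then have "0 < fst (snd st) + snd (snd st)" using False by simp
          then show "triest_step M (card G) x st = pairstep e st" unfolding e_def by (rule ts_pair[OF ins])
        qed
        then show ?thesis unfolding run r0 using Phi_pair[OF fE v(1) _ ME] False v D'D by simp
      next
        case True
        have ME0: "M \<le> card E" using ME True by simp
        have cG: "card G = card E + 1" using v fE by simp
        have "Phi M E D \<bind> triest_step M (card G) x
            = pmf_of_set (Ss M E) \<bind> (\<lambda>A. triest_step M (card G) x (A, 0, 0))"
          unfolding True Phi_zero[OF fE ME0] by (simp add: bind_map_pmf)
        also have "\<dots> = pmf_of_set (Ss M E) \<bind> (\<lambda>A. map_pmf (\<lambda>A. (A, 0, 0)) (resK M (card E + 1) e A))"
        proof (intro bind_pmf_cong refl)
          fix A assume "A \<in> set_pmf (pmf_of_set (Ss M E))"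
          then have "card A = M" using Ss_finite[OF fE] Ss_ne[OF fE ME0] by (simp add: Ss_def)
          then show "triest_step M (card G) x (A, 0, 0) = map_pmf (\<lambda>A. (A, 0, 0)) (resK M (card E + 1) e A)"
            using ts_full[OF ins] cG by (simp add: e_def)
        qed
        also have "\<dots> = map_pmf (\<lambda>A. (A, 0, 0)) (pmf_of_set (Ss M E) \<bind> resK M (card E + 1) e)"
          by (simp add: map_bind_pmf)
        also have "\<dots> = map_pmf (\<lambda>A. (A, 0, 0)) (pmf_of_set (Ss M G))"
          using reservoir[OF fE v(1) assms(2) ME0] v by simp
        also have "\<dots> = Phi M G 0"
          using Phi_zero[OF fG] ME0 cG by simp
        finally show ?thesis unfolding run r0 using D'D True by simp
      qed
    qed
    show ?thesis
    proof (intro conjI impI)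
      show "triest_run M \<sigma> (Suc t) = Phi M (graph_at \<sigma> (Suc t)) (dcount \<sigma> (Suc t))"
        using main by (simp add: G_def D'_def)
      assume "P \<sigma> (Suc t) \<le> M"
      then have "P \<sigma> (Suc t) = M" using False Pst by simp
      then show "triest_run M \<sigma> (Suc t) = return_pmf (graph_at \<sigma> (Suc t), dcount \<sigma> (Suc t), 0)"
        using main det by (simp add: G_def D'_def)
    qed
  qed
qed



lemma tri_card: "T \<in> triangles E \<Longrightarrow> card T = 3"
proof -
  assume "T \<in> triangles E"
  then obtain u v w where h: "u \<noteq> v" "v \<noteq> w" "w \<noteq> u" "T = {{u, v}, {v, w}, {w, u}}"
    by (auto simp: triangles_def)
  have a: "{u, v} \<noteq> {v, w}" proof assume "{u, v} = {v, w}" then have "u \<in> {v, w}" by blast then show False using h by blast qed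
  have b: "{u, v} \<noteq> {w, u}" proof assume "{u, v} = {w, u}" then have "v \<in> {w, u}" by blast then show False using h by blast qed
  have c: "{v, w} \<noteq> {w, u}" proof assume "{v, w} = {w, u}" then have "v \<in> {w, u}" by blast then show False using h by blast qed
  show ?thesis unfolding h(4) using a b c by (simp add: card_insert_if)
qed

lemma tri_sub: "T \<in> triangles E \<Longrightarrow> T \<subseteq> E" unfolding triangles_def by blast

lemma tri_iff: "T \<in> triangles X \<longleftrightarrow> T \<in> triangles UNIV \<and> T \<subseteq> X"
proof
  assume "T \<in> triangles X"
  then obtain u v w where h: "u \<noteq> v" "v \<noteq> w" "w \<noteq> u" "T = {{u,v},{v,w},{w,u}}" "T \<subseteq> X"
    unfolding triangles_def by blast
  have "T \<in> triangles UNIV" unfolding triangles_def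
    using h(1-4) by (intro CollectI exI[of _ u] exI[of _ v] exI[of _ w]) simp
  then show "T \<in> triangles UNIV \<and> T \<subseteq> X" using h(5) by simp
next
  assume a: "T \<in> triangles UNIV \<and> T \<subseteq> X"
  then obtain u v w where h: "u \<noteq> v" "v \<noteq> w" "w \<noteq> u" "T = {{u,v},{v,w},{w,u}}"
    unfolding triangles_def by blast
  show "T \<in> triangles X" unfolding triangles_def
    using h a by (intro CollectI exI[of _ u] exI[of _ v] exI[of _ w]) simp
qed

lemma tri_mono: "A \<subseteq> E \<Longrightarrow> triangles A = {T \<in> triangles E. T \<subseteq> A}"
  using tri_iff[of _ A] tri_iff[of _ E] by blast

lemma tri_finite: "finite E \<Longrightarrow> finite (triangles E)"
  by (rule finite_subset[of _ "Pow E"]) (use tri_sub in blast)+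

lemma tri_small: assumes "finite E" "card E < 3" shows "triangles E = {}"
proof (rule ccontr)
  assume "triangles E \<noteq> {}"
  then obtain T where T: "T \<in> triangles E" by auto
  then have "card T \<le> card E" using card_mono[OF assms(1) tri_sub[OF T]] by simp
  then show False using tri_card[OF T] assms by simp
qed

lemma tri_big: assumes "finite E" "triangles E \<noteq> {}" shows "3 \<le> card E"
  using tri_small[OF assms(1)] assms(2) by linarith

lemma count_super: assumes "finite E" "T \<subseteq> E" "card T = 3" "3 \<le> m"
  shows "card {A. A \<subseteq> E \<and> card A = m \<and> T \<subseteq> A} = (card E - 3) choose (m - 3)"
proof -
  have fT: "finite T" using assms finite_subset by blast
  have "bij_betw (\<lambda>A. A - T) {A. A \<subseteq> E \<and> card A = m \<and> T \<subseteq> A} {B. B \<subseteq> E - T \<and> card B = m - 3}"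
  proof (rule bij_betw_byWitness[where f'="\<lambda>B. B \<union> T"])
    show "\<forall>a\<in>{A. A \<subseteq> E \<and> card A = m \<and> T \<subseteq> A}. a - T \<union> T = a" by auto
    show "\<forall>a'\<in>{B. B \<subseteq> E - T \<and> card B = m - 3}. a' \<union> T - T = a'" by auto
    show "(\<lambda>A. A - T) ` {A. A \<subseteq> E \<and> card A = m \<and> T \<subseteq> A} \<subseteq> {B. B \<subseteq> E - T \<and> card B = m - 3}"
    proof (rule image_subsetI)
      fix A assume A: "A \<in> {A. A \<subseteq> E \<and> card A = m \<and> T \<subseteq> A}"
      then have h: "A \<subseteq> E" "card A = m" "T \<subseteq> A" by auto
      have fA: "finite A" using h(1) assms(1) finite_subset by blast
      have "card (A - T) = card A - card T" using card_Diff_subset[OF fT h(3)] .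
      then have "card (A - T) = m - 3" using h(2) assms(3) by simp
      moreover have "A - T \<subseteq> E - T" using h(1) by blast
      ultimately show "A - T \<in> {B. B \<subseteq> E - T \<and> card B = m - 3}" by simp
    qed
    show "(\<lambda>B. B \<union> T) ` {B. B \<subseteq> E - T \<and> card B = m - 3} \<subseteq> {A. A \<subseteq> E \<and> card A = m \<and> T \<subseteq> A}"
    proof (rule image_subsetI)
      fix B assume "B \<in> {B. B \<subseteq> E - T \<and> card B = m - 3}"
      then have B: "B \<subseteq> E - T" "card B = m - 3" by auto
      have fB: "finite B" using B(1) assms(1) finite_subset by blast
      have "B \<inter> T = {}" using B by blast
      then have "card (B \<union> T) = card B + card T" using card_Un_disjoint[OF fB fT] by simp
      then have "card (B \<union> T) = m" using B(2) assms(3,4) by simp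
      moreover have "B \<union> T \<subseteq> E" using B(1) assms(2) by blast
      ultimately show "B \<union> T \<in> {A. A \<subseteq> E \<and> card A = m \<and> T \<subseteq> A}" by simp
    qed
  qed
  then have "card {A. A \<subseteq> E \<and> card A = m \<and> T \<subseteq> A} = card {B. B \<subseteq> E - T \<and> card B = m - 3}"
    by (rule bij_betw_same_card)
  also have "\<dots> = card (E - T) choose (m - 3)" using assms(1) by (simp add: n_subsets)
  also have "card (E - T) = card E - 3" using assms fT by (simp add: card_Diff_subset)
  finally show ?thesis .
qed

lemma sum_tri: assumes "finite E" "3 \<le> m"
  shows "(\<Sum>A\<in>Ss m E. real (card (triangles A))) = real (card (triangles E)) * real ((card E - 3) choose (m - 3))"
proof -
  have fS: "finite (Ss m E)" using Ss_finite[OF assms(1)] .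
  have fT: "finite (triangles E)" using tri_finite[OF assms(1)] .
  have "(\<Sum>A\<in>Ss m E. real (card (triangles A))) = (\<Sum>A\<in>Ss m E. \<Sum>T\<in>triangles E. if T \<subseteq> A then 1 else 0)"
  proof (rule sum.cong[OF refl])
    fix A assume "A \<in> Ss m E"
    then have "A \<subseteq> E" by (simp add: Ss_def)
    then have "real (card (triangles A)) = real (card {T \<in> triangles E. T \<subseteq> A})" using tri_mono by metis
    also have "\<dots> = (\<Sum>T\<in>{T \<in> triangles E. T \<subseteq> A}. 1)" by simp
    also have "\<dots> = (\<Sum>T\<in>triangles E. if T \<subseteq> A then 1 else 0)" using fT by (rule sum.inter_filter)
    finally show "real (card (triangles A)) = (\<Sum>T\<in>triangles E. if T \<subseteq> A then 1 else 0)" .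
  qed
  also have "\<dots> = (\<Sum>T\<in>triangles E. \<Sum>A\<in>Ss m E. if T \<subseteq> A then 1 else 0)" by (rule sum.swap)
  also have "\<dots> = (\<Sum>T\<in>triangles E. real ((card E - 3) choose (m - 3)))"
  proof (rule sum.cong[OF refl])
    fix T assume T: "T \<in> triangles E"
    have "(\<Sum>A\<in>Ss m E. if T \<subseteq> A then 1 else 0) = (\<Sum>A\<in>{A \<in> Ss m E. T \<subseteq> A}. 1::real)"
      using fS by (rule sum.inter_filter[symmetric])
    also have "{A \<in> Ss m E. T \<subseteq> A} = {A. A \<subseteq> E \<and> card A = m \<and> T \<subseteq> A}" by (auto simp: Ss_def)
    finally show "(\<Sum>A\<in>Ss m E. if T \<subseteq> A then 1 else 0) = real ((card E - 3) choose (m - 3))"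
      using count_super[OF assms(1) tri_sub[OF T] tri_card[OF T] assms(2)] by simp
  qed
  also have "\<dots> = real (card (triangles E)) * real ((card E - 3) choose (m - 3))" by simp
  finally show ?thesis .
qed

lemma sumPs: assumes "finite E"
  shows "(\<Sum>y\<in>Ps M E D. h (fst y)) = (\<Sum>m\<le>M. real (D choose (M - m)) * (\<Sum>A\<in>Ss m E. h A))"
proof -
  define W where "W = {A. A \<subseteq> E \<and> card A \<le> M}"
  have fW: "finite W" unfolding W_def by (rule finite_subset[of _ "Pow E"]) (auto simp: assms)
  have PsS: "Ps M E D = (SIGMA A:W. Ss (M - card A) {..<D})"
  proof (intro equalityI subsetI)
    fix x assume x: "x \<in> Ps M E D"
    obtain A B where xe: "x = (A,B)" by fastforce
    have h: "A \<subseteq> E" "B \<subseteq> {..<D}" "card A + card B = M" using x unfolding xe Ps_mem by auto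
    have "A \<in> W" using h unfolding W_def by simp
    moreover have "B \<in> Ss (M - card A) {..<D}" using h unfolding Ss_def by simp
    ultimately show "x \<in> (SIGMA A:W. Ss (M - card A) {..<D})" unfolding xe by (rule SigmaI)
  next
    fix x assume x: "x \<in> (SIGMA A:W. Ss (M - card A) {..<D})"
    obtain A B where xe: "x = (A,B)" by fastforce
    have h: "A \<in> W" "B \<in> Ss (M - card A) {..<D}" using x unfolding xe by auto
    have "A \<subseteq> E" "card A \<le> M" using h(1) unfolding W_def by auto
    moreover have "B \<subseteq> {..<D}" "card B = M - card A" using h(2) unfolding Ss_def by auto
    ultimately show "x \<in> Ps M E D" unfolding xe Ps_mem by simp
  qed
  have fin2: "\<forall>A\<in>W. finite (Ss (M - card A) {..<D})" using Ss_finite[of "{..<D}"] by blast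
  have cp: "(\<lambda>(x, y). h x) = (\<lambda>y. h (fst y))" by (rule ext) (simp add: case_prod_beta)
  have "(\<Sum>A\<in>W. \<Sum>B\<in>Ss (M - card A) {..<D}. h A) = (\<Sum>y\<in>(SIGMA A:W. Ss (M - card A) {..<D}). (\<lambda>(x, y). h x) y)"
    by (rule sum.Sigma[OF fW fin2])
  then have "(\<Sum>y\<in>Ps M E D. h (fst y)) = (\<Sum>A\<in>W. \<Sum>B\<in>Ss (M - card A) {..<D}. h A)"
    unfolding PsS cp by simp
  also have "\<dots> = (\<Sum>A\<in>W. real (D choose (M - card A)) * h A)"
  proof (rule sum.cong[OF refl])
    fix A assume "A \<in> W"
    have "(\<Sum>B\<in>Ss (M - card A) {..<D}. h A) = real (card (Ss (M - card A) {..<D})) * h A"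
      by (rule sum_constant)
    then show "(\<Sum>B\<in>Ss (M - card A) {..<D}. h A) = real (D choose (M - card A)) * h A"
      using card_Ss[of "{..<D}" "M - card A"] by simp
  qed
  also have "\<dots> = (\<Sum>m\<le>M. \<Sum>A\<in>{A \<in> W. card A = m}. real (D choose (M - card A)) * h A)"
  proof -
    have "card ` W \<subseteq> {..M}" unfolding W_def by auto
    then show ?thesis by (rule sum.group[OF fW finite_atMost, symmetric])
  qed
  also have "\<dots> = (\<Sum>m\<le>M. real (D choose (M - m)) * (\<Sum>A\<in>Ss m E. h A))"
  proof (rule sum.cong[OF refl])
    fix m assume m: "m \<in> {..M}"
    have "{A \<in> W. card A = m} = Ss m E" using m unfolding W_def Ss_def by auto
    then have "(\<Sum>A\<in>{A \<in> W. card A = m}. real (D choose (M - card A)) * h A) = (\<Sum>A\<in>Ss m E. real (D choose (M - m)) * h A)"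
      by (intro sum.cong) (auto simp: Ss_def)
    then show "(\<Sum>A\<in>{A \<in> W. card A = m}. real (D choose (M - card A)) * h A) = real (D choose (M - m)) * (\<Sum>A\<in>Ss m E. h A)"
      by (simp add: sum_distrib_left)
  qed
  finally show ?thesis .
qed



lemma part1: assumes "finite E" "card E + D \<le> M"
  shows "rho M (card E) (E, D, 0) = real (card (triangles E))"
proof (cases "card E < 3")
  case True
  then show ?thesis using tri_small[OF assms(1)] by (simp add: rho_def)
next
  case False
  define s where "s = card E"
  have k: "kappa M s D = 1"
  proof -
    have om: "min M (s + D) = s + D" using assms s_def by simp
    have "(\<Sum>j\<in>{0..2::nat}. (if j \<le> s + D then real (s choose j) * real (D choose (s + D - j)) else 0)) = 0"
    proof (rule sum.neutral, rule ballI)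
      fix j assume "j \<in> {0..2::nat}"
      then have "D < s + D - j" using False s_def by auto
      then show "(if j \<le> s + D then real (s choose j) * real (D choose (s + D - j)) else 0) = 0" by simp
    qed
    then show ?thesis unfolding kappa_def Let_def om by simp
  qed
  have p: "psi 3 s s = 1" by (simp add: psi_def)
  show ?thesis using False k p by (simp add: rho_def tau_def s_def)
qed

lemma psi_lemma: assumes "3 \<le> m"
  shows "real ((s - 3) choose (m - 3)) * psi 3 m s = real (s choose m)"
proof (cases "(s - 3) choose (m - 3) = 0")
  case True
  then have "s - 3 < m - 3" by simp
  then have "s < m" using assms by linarith
  have z: "real ((s - 3) choose (m - 3)) = 0" using True by simp
  show ?thesis unfolding z using \<open>s < m\<close> by simp
next
  case False
  then show ?thesis by (simp add: psi_def)
qed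

lemma part2: fixes E :: "'v set set" assumes "finite E" "M < card E + D" "3 \<le> M"
  shows "measure_pmf.expectation (Phi M E D) (rho M (card E)) = real (card (triangles E))"
proof -
  define s where "s = card E"
  define \<Delta> where "\<Delta> = real (card (triangles E))"
  define \<kappa> where "\<kappa> = kappa M s D"
  define C where "C = real ((s + D) choose M)"
  define Q where "Q = (\<Sum>m\<le>M. if m < 3 then 0 else real (s choose m) * real (D choose (M - m)))"
  define g where "g A = (if card A < 3 then 0 else real (card (triangles A)) / \<kappa> * psi 3 (card A) s)" for A :: "'v set set"
  have fin: "finite (Ps M E D)" and ne: "Ps M E D \<noteq> {}" using Ps_finite[OF assms(1)] Ps_ne[OF assms(1)] assms(2) by auto
  have Cpos: "C > 0" using assms(2) s_def by (simp add: C_def)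
  have cardPs: "real (card (Ps M E D)) = C"
  proof -
    have "real (card (Ps M E D)) = (\<Sum>y\<in>Ps M E D. (\<lambda>A. 1::real) (fst y))" by simp
    also have "\<dots> = (\<Sum>m\<le>M. real (D choose (M - m)) * (\<Sum>A\<in>Ss m E. 1))" by (rule sumPs[OF assms(1)])
    also have "\<dots> = (\<Sum>m\<le>M. real (s choose m) * real (D choose (M - m)))"
      by (rule sum.cong[OF refl]) (simp add: card_Ss[OF assms(1)] s_def)
    also have "\<dots> = real (\<Sum>m\<le>M. (s choose m) * (D choose (M - m)))" by simp
    also have "\<dots> = C" unfolding vandermonde C_def ..
    finally show ?thesis .
  qed
  have "measure_pmf.expectation (Phi M E D) (rho M (card E)) = (\<Sum>y\<in>Ps M E D. rho M s (fR D y)) / real (card (Ps M E D))"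
    unfolding Phi_def integral_map_pmf s_def using fin ne by (simp add: integral_pmf_of_set)
  also have "(\<Sum>y\<in>Ps M E D. rho M s (fR D y)) = (\<Sum>y\<in>Ps M E D. g (fst y))"
  proof (rule sum.cong[OF refl])
    fix y assume y: "y \<in> Ps M E D"
    obtain A B where ye: "y = (A,B)" by fastforce
    have "B \<subseteq> {..<D}" using y ye by (simp add: Ps_def)
    then have "card B \<le> D" using card_mono[of "{..<D}" B] by simp
    then show "rho M s (fR D y) = g (fst y)" unfolding ye
      by (simp add: rho_def fR_def g_def tau_def \<kappa>_def)
  qed
  also have "\<dots> = (\<Sum>m\<le>M. real (D choose (M - m)) * (\<Sum>A\<in>Ss m E. g A))" by (rule sumPs[OF assms(1)])
  also have "\<dots> = (\<Sum>m\<le>M. \<Delta> / \<kappa> * (if m < 3 then 0 else real (s choose m) * real (D choose (M - m))))"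
  proof (rule sum.cong[OF refl])
    fix m assume "m \<in> {..M}"
    show "real (D choose (M - m)) * (\<Sum>A\<in>Ss m E. g A) = \<Delta> / \<kappa> * (if m < 3 then 0 else real (s choose m) * real (D choose (M - m)))"
    proof (cases "m < 3")
      case True
      have "(\<Sum>A\<in>Ss m E. g A) = 0" by (rule sum.neutral) (use True in \<open>auto simp: g_def Ss_def\<close>)
      then show ?thesis using True by simp
    next
      case False
      have "(\<Sum>A\<in>Ss m E. g A) = (\<Sum>A\<in>Ss m E. real (card (triangles A)) * (psi 3 m s / \<kappa>))"
        by (rule sum.cong[OF refl]) (use False in \<open>auto simp: g_def Ss_def\<close>)
      also have "\<dots> = (\<Sum>A\<in>Ss m E. real (card (triangles A))) * (psi 3 m s / \<kappa>)"
        by (rule sum_distrib_right[symmetric])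
      also have "\<dots> = \<Delta> * (real ((s - 3) choose (m - 3)) * psi 3 m s) / \<kappa>"
        using sum_tri[OF assms(1), of m] False by (simp add: \<Delta>_def s_def)
      also have "\<dots> = \<Delta> * real (s choose m) / \<kappa>" using psi_lemma[of m s] False by simp
      finally show ?thesis using False by simp
    qed
  qed
  also have "\<dots> = \<Delta> / \<kappa> * Q" by (simp add: Q_def sum_distrib_left)
  finally have ex: "measure_pmf.expectation (Phi M E D) (rho M (card E)) = \<Delta> / \<kappa> * Q / C"
    using cardPs by simp
  have kq: "\<kappa> = Q / C"
  proof -
    have om: "min M (s + D) = M" using assms s_def by simp
    define S2 where "S2 = (\<Sum>j\<in>{0..2::nat}. real (s choose j) * real (D choose (M - j)))"
    have k1: "\<kappa> = 1 - S2 / C"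
      unfolding \<kappa>_def kappa_def Let_def om S2_def C_def
      using assms(3) by (simp add: if_P)
    have "C = (\<Sum>m\<le>M. real (s choose m) * real (D choose (M - m)))"
      using cardPs[symmetric] by (simp add: C_def vandermonde[symmetric])
    also have "\<dots> = (\<Sum>m\<le>M. (if m < 3 then real (s choose m) * real (D choose (M - m)) else 0)) + Q"
      unfolding Q_def sum.distrib[symmetric] by (rule sum.cong) auto
    also have "(\<Sum>m\<le>M. (if m < 3 then real (s choose m) * real (D choose (M - m)) else 0)) = S2"
    proof -
      have "(\<Sum>m\<le>M. (if m < 3 then real (s choose m) * real (D choose (M - m)) else 0))
          = (\<Sum>m\<in>{m\<in>{..M}. m < 3}. real (s choose m) * real (D choose (M - m)))"
        by (rule sum.inter_filter[symmetric]) simp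
      also have "{m\<in>{..M}. m < 3} = {0..2}" using assms(3) by auto
      finally show ?thesis unfolding S2_def .
    qed
    finally have "C = S2 + Q" .
    then show ?thesis using k1 Cpos by (simp add: field_simps)
  qed
  show ?thesis
  proof (cases "\<Delta> = 0")
    case True
    then show ?thesis using ex by (simp add: \<Delta>_def)
  next
    case False
    then have "triangles E \<noteq> {}" by (auto simp: \<Delta>_def)
    then have s3: "3 \<le> s" using tri_big[OF assms(1)] by (simp add: s_def)
    define m0 where "m0 = min s M"
    have m0: "3 \<le> m0" "m0 \<le> M" "m0 \<le> s" "M - m0 \<le> D" using s3 assms s_def by (auto simp: m0_def)
    have "0 < (if m0 < 3 then 0 else real (s choose m0) * real (D choose (M - m0)))"
      using m0 by simp
    also have "\<dots> \<le> Q" unfolding Q_def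
      by (rule member_le_sum) (use m0 in auto)
    finally have "Q > 0" .
    then have "\<kappa> \<noteq> 0" using kq Cpos by simp
    then show ?thesis using ex kq Cpos by (simp add: \<Delta>_def)
  qed
qed



theorem theorem4p16:
  fixes M :: nat and \<sigma> :: "'v op list"
  assumes "M \<ge> 6" and "valid_stream \<sigma>"
  shows "\<forall>t. 1 \<le> t \<and> t \<le> length \<sigma> \<longrightarrow>
           ((\<forall>t'. M + 1 \<le> t' \<and> t' \<le> t \<longrightarrow> card (graph_at \<sigma> t') \<noteq> M + 1) \<longrightarrow>
              (\<forall>st \<in> set_pmf (triest_run M \<sigma> t).
                 rho M (card (graph_at \<sigma> t)) st = real (card (triangles (graph_at \<sigma> t))))) \<and>
           ((\<exists>t'. M + 1 \<le> t' \<and> t' \<le> t \<and> card (graph_at \<sigma> t') = M + 1) \<longrightarrow>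
              measure_pmf.expectation (triest_run M \<sigma> t) (rho M (card (graph_at \<sigma> t)))
                = real (card (triangles (graph_at \<sigma> t))))"
proof (intro allI impI)
  fix t assume t: "1 \<le> t \<and> t \<le> length \<sigma>"
  then have tl: "t \<le> length \<sigma>" by simp
  have M0: "0 < M" using assms(1) by simp
  have fE: "finite (graph_at \<sigma> t)" by (rule finite_graph_at)
  have I: "P \<sigma> t \<le> M \<Longrightarrow> triest_run M \<sigma> t = return_pmf (graph_at \<sigma> t, dcount \<sigma> t, 0)"
          "M \<le> P \<sigma> t \<Longrightarrow> triest_run M \<sigma> t = Phi M (graph_at \<sigma> t) (dcount \<sigma> t)"
    using inv[OF assms(2) M0 tl] by auto
  show "((\<forall>t'. M + 1 \<le> t' \<and> t' \<le> t \<longrightarrow> card (graph_at \<sigma> t') \<noteq> M + 1) \<longrightarrow>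
              (\<forall>st \<in> set_pmf (triest_run M \<sigma> t).
                 rho M (card (graph_at \<sigma> t)) st = real (card (triangles (graph_at \<sigma> t))))) \<and>
           ((\<exists>t'. M + 1 \<le> t' \<and> t' \<le> t \<and> card (graph_at \<sigma> t') = M + 1) \<longrightarrow>
              measure_pmf.expectation (triest_run M \<sigma> t) (rho M (card (graph_at \<sigma> t)))
                = real (card (triangles (graph_at \<sigma> t))))"
  proof (cases "P \<sigma> t \<le> M")
    case True
    have nohit: "\<not> (\<exists>t'. M + 1 \<le> t' \<and> t' \<le> t \<and> card (graph_at \<sigma> t') = M + 1)"
    proof
      assume "\<exists>t'. M + 1 \<le> t' \<and> t' \<le> t \<and> card (graph_at \<sigma> t') = M + 1"
      then obtain t' where t': "t' \<le> t" "card (graph_at \<sigma> t') = M + 1" by auto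
      have "M + 1 \<le> P \<sigma> t'" using t' P_ge_card[of \<sigma> t'] by simp
      also have "\<dots> \<le> P \<sigma> t" using P_mono[OF assms(2) t'(1) tl] .
      finally show False using True by simp
    qed
    have "card (graph_at \<sigma> t) + dcount \<sigma> t \<le> M" using True by (simp add: P_def)
    then have "\<forall>st \<in> set_pmf (triest_run M \<sigma> t).
                 rho M (card (graph_at \<sigma> t)) st = real (card (triangles (graph_at \<sigma> t)))"
      using I(1)[OF True] part1[OF fE] by simp
    then show ?thesis using nohit by blast
  next
    case False
    then obtain t' where t': "t' \<le> t" "M + 1 \<le> t'" "card (graph_at \<sigma> t') = M + 1"
      using P_hit[OF assms(2) tl, of M] by auto
    have "M < card (graph_at \<sigma> t) + dcount \<sigma> t" using False by (simp add: P_def)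
    then have "measure_pmf.expectation (triest_run M \<sigma> t) (rho M (card (graph_at \<sigma> t)))
                = real (card (triangles (graph_at \<sigma> t)))"
      using I(2) False part2[OF fE _] assms(1) by simp
    then show ?thesis using t' by blast
  qed
qed

end
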